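(* Let $G$ be a graph with a linear order $<$ on $V(G)$ satisfying the X-property, let $s<t$ be vertices with $d^*:=\operatorname{dist}(s,t)<\infty$, and let $P=p_0,p_1,\dots,p_{d^*}$ (with $p_0=s$, $p_{d^*}=t$) be a shortest $s$-$t$ path with $\operatorname{lefti}(P)<\operatorname{righti}(P)$. Then $p_i<p_j$ for all indices $i<\operatorname{lefti}(P)<j$, and $p_i<p_j$ for all indices $i<\operatorname{righti}(P)<j$.
   Context: The X-property: for all vertices $p<q<r<s$, if $\{p,r\}\in E(G)$ and $\{q,s\}\in E(G)$ then $\{p,s\}\in E(G)$. $\operatorname{dist}$ is the number of edges of a shortest path. $\operatorname{lefti}(P)$ is the index $i$ such that $p_i$ is the leftmost (w.r.t. $<$) vertex of $P$, and $\operatorname{righti}(P)$ the index of the rightmost vertex of $P$. *)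

theory Defs
  imports Main
begin

definition graph :: "'a set \<Rightarrow> ('a \<Rightarrow> 'a \<Rightarrow> bool) \<Rightarrow> bool" where
  "graph V E \<longleftrightarrow> finite V \<and> (\<forall>u v. E u v \<longrightarrow> u \<in> V \<and> v \<in> V)
     \<and> (\<forall>u v. E u v \<longrightarrow> E v u) \<and> (\<forall>u. \<not> E u u)"

definition X_property :: "'a::linorder set \<Rightarrow> ('a \<Rightarrow> 'a \<Rightarrow> bool) \<Rightarrow> bool" where
  "X_property V E \<longleftrightarrow> (\<forall>p\<in>V. \<forall>q\<in>V. \<forall>r\<in>V. \<forall>s\<in>V.
     p < q \<and> q < r \<and> r < s \<and> E p r \<and> E q s \<longrightarrow> E p s)"

text \<open>A walk given as the list of its vertices p_0,...,p_k; it has k = length - 1 edges.\<close>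
definition walk :: "('a \<Rightarrow> 'a \<Rightarrow> bool) \<Rightarrow> 'a list \<Rightarrow> 'a \<Rightarrow> 'a \<Rightarrow> bool" where
  "walk E P s t \<longleftrightarrow> P \<noteq> [] \<and> hd P = s \<and> last P = t
     \<and> (\<forall>i. Suc i < length P \<longrightarrow> E (P ! i) (P ! Suc i))"

definition connected_pair :: "('a \<Rightarrow> 'a \<Rightarrow> bool) \<Rightarrow> 'a \<Rightarrow> 'a \<Rightarrow> bool" where
  "connected_pair E s t \<longleftrightarrow> (\<exists>P. walk E P s t)"

text \<open>Distance: number of edges of a shortest walk (meaningful when connected_pair holds).\<close>
definition dist :: "('a \<Rightarrow> 'a \<Rightarrow> bool) \<Rightarrow> 'a \<Rightarrow> 'a \<Rightarrow> nat" where
  "dist E s t = (LEAST n. \<exists>P. walk E P s t \<and> length P = Suc n)"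

definition shortest_path :: "('a \<Rightarrow> 'a \<Rightarrow> bool) \<Rightarrow> 'a list \<Rightarrow> 'a \<Rightarrow> 'a \<Rightarrow> bool" where
  "shortest_path E P s t \<longleftrightarrow> walk E P s t \<and> length P = Suc (dist E s t)"

definition lefti :: "'a::linorder list \<Rightarrow> nat" where
  "lefti P = (THE i. i < length P \<and> P ! i = Min (set P))"

definition righti :: "'a::linorder list \<Rightarrow> nat" where
  "righti P = (THE i. i < length P \<and> P ! i = Max (set P))"

end

theory Submission imports Defs "HOL-Library.Dual_Ordered_Lattice" begin

instance dual :: (linorder) linorder
  by standard (simp add: dual_less_eq_iff linear)

lemma walk_shortcut:
  assumes "walk E P s t" "a < b" "b < length P" "E (P!a) (P!b)"
  shows "walk E (take (Suc a) P @ drop b P) s t"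
proof -
  have ne: "drop b P \<noteq> []" using assms by simp
  have e: "\<forall>i. Suc i < length P \<longrightarrow> E (P ! i) (P ! Suc i)" using assms(1) by (simp add: walk_def)
  have "\<forall>i. Suc i < length (take (Suc a) P @ drop b P) \<longrightarrow>
     E ((take (Suc a) P @ drop b P) ! i) ((take (Suc a) P @ drop b P) ! Suc i)"
  proof (intro allI impI)
    fix i assume i: "Suc i < length (take (Suc a) P @ drop b P)"
    consider "Suc i < Suc a" | "i = a" | "i > a" by linarith
    then show "E ((take (Suc a) P @ drop b P) ! i) ((take (Suc a) P @ drop b P) ! Suc i)"
    proof cases
      case 1 then show ?thesis using e assms i by (simp add: nth_append)
    next
      case 2 then show ?thesis using e assms i by (simp add: nth_append)
    next
      case 3
      have "Suc (b + (i - Suc a)) < length P" using i 3 assms by auto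
      then have "E (P ! (b + (i - Suc a))) (P ! Suc (b + (i - Suc a)))" using e by blast
      moreover have "Suc i - Suc a = Suc (i - Suc a)" using 3 by simp
      ultimately show ?thesis using 3 assms i by (simp add: nth_append)
    qed
  qed
  moreover have "hd (take (Suc a) P @ drop b P) = s" using assms by (cases P) (auto simp: walk_def)
  moreover have "last (take (Suc a) P @ drop b P) = t" using assms ne by (simp add: walk_def last_drop)
  ultimately show ?thesis using ne by (simp add: walk_def)
qed

lemma walk_skip:
  assumes "walk E P s t" "a < b" "b < length P" "P!a = P!b"
  shows "walk E (take a P @ drop b P) s t"
proof -
  have ne: "drop b P \<noteq> []" using assms by simp
  have e: "\<forall>i. Suc i < length P \<longrightarrow> E (P ! i) (P ! Suc i)" using assms(1) by (simp add: walk_def)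
  have "\<forall>i. Suc i < length (take a P @ drop b P) \<longrightarrow>
     E ((take a P @ drop b P) ! i) ((take a P @ drop b P) ! Suc i)"
  proof (intro allI impI)
    fix i assume i: "Suc i < length (take a P @ drop b P)"
    consider "Suc i < a" | "Suc i = a" | "i \<ge> a" by linarith
    then show "E ((take a P @ drop b P) ! i) ((take a P @ drop b P) ! Suc i)"
    proof cases
      case 1 then show ?thesis using e assms i by (simp add: nth_append)
    next
      case 2
      have "E (P!i) (P!b)" using e 2 assms by (metis less_trans)
      then show ?thesis using 2 assms i by (simp add: nth_append)
    next
      case 3
      have "Suc (b + (i - a)) < length P" using i 3 assms by auto
      then have "E (P ! (b + (i - a))) (P ! Suc (b + (i - a)))" using e by blast
      moreover have "Suc i - a = Suc (i - a)" using 3 by simp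
      ultimately show ?thesis using 3 assms i by (simp add: nth_append)
    qed
  qed
  moreover have "hd (take a P @ drop b P) = s"
  proof (cases a)
    case 0
    have "P!b = s" using assms 0 by (metis walk_def hd_conv_nth)
    then show ?thesis using 0 assms by (simp add: hd_drop_conv_nth)
  next
    case (Suc a') then show ?thesis using assms by (cases P) (auto simp: walk_def)
  qed
  moreover have "last (take a P @ drop b P) = t" using assms ne by (simp add: walk_def last_drop)
  ultimately show ?thesis using ne by (simp add: walk_def)
qed

lemma sp_len:
  assumes "shortest_path E P s t" "walk E Q s t"
  shows "length P \<le> length Q"
proof -
  have "Q \<noteq> []" using assms(2) by (simp add: walk_def)
  then have "length Q = Suc (length Q - 1)" by simp
  then have "dist E s t \<le> length Q - 1" unfolding dist_def
    using assms(2) by (intro Least_le) metis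
  then show ?thesis using assms(1) \<open>length Q = _\<close> by (simp add: shortest_path_def)
qed


lemma cross_up:
  assumes "k0 \<le> k1" "Q (f k0)" "\<not> Q (f k1)"
  shows "\<exists>k. k0 \<le> k \<and> k < k1 \<and> Q (f k) \<and> \<not> Q (f (Suc k))"
  using assms
proof (induction k1)
  case 0 then show ?case by simp
next
  case (Suc k1)
  show ?case
  proof (cases "k0 \<le> k1")
    case True
    show ?thesis
    proof (cases "Q (f k1)")
      case True then show ?thesis using Suc.prems \<open>k0 \<le> k1\<close> by auto
    next
      case False then show ?thesis using Suc.IH Suc.prems \<open>k0 \<le> k1\<close> by (meson less_SucI)
    qed
  next
    case False then have "k0 = Suc k1" using Suc.prems by simp
    then show ?thesis using Suc.prems by simp
  qed
qed

lemma cross_down: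
  assumes "k0 \<le> k1" "\<not> Q (f k0)" "Q (f k1)"
  shows "\<exists>k. k0 \<le> k \<and> k < k1 \<and> \<not> Q (f k) \<and> Q (f (Suc k))"
  using cross_up[of k0 k1 "\<lambda>x. \<not> Q x" f] assms by auto

lemma lin_aux: "\<not> (x::'b::linorder) < y \<Longrightarrow> x \<noteq> y \<Longrightarrow> y < x" by auto

lemma core:
  fixes f :: "nat \<Rightarrow> 'b::linorder"
  assumes ne: "\<And>a b. a \<le> n \<Longrightarrow> b \<le> n \<Longrightarrow> a \<noteq> b \<Longrightarrow> f a \<noteq> f b"
  and pe: "\<And>k. k < n \<Longrightarrow> E (f k) (f (Suc k)) \<and> E (f (Suc k)) (f k)"
  and bar: "\<And>a b c d. a \<le> n \<Longrightarrow> b \<le> n \<Longrightarrow> c \<le> n \<Longrightarrow> d \<le> n \<Longrightarrow>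
      f a < f b \<Longrightarrow> f b < f c \<Longrightarrow> f c < f d \<Longrightarrow> E (f a) (f c) \<Longrightarrow> E (f b) (f d) \<Longrightarrow>
      d \<le> Suc a \<and> a \<le> Suc d"
  and lmin: "\<And>k. k \<le> n \<Longrightarrow> f l \<le> f k"
  and rmax: "\<And>k. k \<le> n \<Longrightarrow> f k \<le> f r"
  and lr: "l < r" "r \<le> n" and st: "f 0 < f n"
  and ij: "i < l" "l < j" "j \<le> n"
  shows "f i < f j"
proof (rule ccontr)
  assume "\<not> f i < f j"
  hence fji: "f j < f i" using ne[of i j] ij by fastforce
  have fin: "finite (f ` {l<..n})" by simp
  have nem: "f ` {l<..n} \<noteq> {}" using ij by auto
  obtain j0 where j0: "j0 \<in> {l<..n}" "f j0 = Min (f ` {l<..n})"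
    using Min_in[OF fin nem] by auto
  have j0min: "\<And>k. l < k \<Longrightarrow> k \<le> n \<Longrightarrow> f j0 \<le> f k" using j0 fin by simp
  have j0b: "l < j0" "j0 \<le> n" using j0 by auto
  have "f j0 < f i" using j0min[of j] ij fji by simp
  define A where "A = {k. k < l \<and> f j0 < f k}"
  have finA: "finite A" unfolding A_def by simp
  have iA: "i \<in> A" unfolding A_def using ij \<open>f j0 < f i\<close> by simp
  define a where "a = Max A"
  have aA: "a \<in> A" unfolding a_def using finA iA Max_in by blast
  have amax: "\<And>k. k \<in> A \<Longrightarrow> k \<le> a" unfolding a_def using finA by simp
  have al: "a < l" and fa: "f j0 < f a" using aA A_def by auto
  have fa1: "f (Suc a) < f j0"
  proof (cases "Suc a = l")
    case True then show ?thesis using lmin[of j0] ne[of l j0] j0b by fastforce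
  next
    case False
    then have "Suc a \<notin> A" using amax by fastforce
    then have "f (Suc a) \<le> f j0" using False al A_def by auto
    then show ?thesis using ne[of "Suc a" j0] j0b al by fastforce
  qed
  define Q where "Q = (\<lambda>x. f (Suc a) < x \<and> x < f a)"
  have Ea: "E (f (Suc a)) (f a)" using pe[of a] al lr by simp
  have L: "Suc a = l \<and> r = Suc l \<and> f l < f (Suc (Suc l)) \<and> f (Suc (Suc l)) < f a \<and> Suc (Suc l) \<le> n"
  proof (cases "j0 \<le> r")
    case True
    have "Q (f j0)" using fa fa1 Q_def by simp
    moreover have "\<not> Q (f r)" using rmax[of a] al lr Q_def by auto
    ultimately obtain k where k: "j0 \<le> k" "k < r" "Q (f k)" "\<not> Q (f (Suc k))"
      using cross_up[of j0 r Q f, OF True] by blast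
    have "f j0 \<le> f (Suc k)" using j0min[of "Suc k"] k j0b lr by simp
    then have "f a \<le> f (Suc k)" using k(4) fa1 Q_def by auto
    then have "f a < f (Suc k)" using ne[of a "Suc k"] k j0b al lr by fastforce
    then have "Suc k \<le> Suc (Suc a)"
      using bar[of "Suc a" k a "Suc k"] k Q_def Ea pe[of k] al lr j0b by auto
    then show ?thesis using k j0b al by simp
  next
    case False
    have nQ: "\<not> Q (f r)" using rmax[of a] al lr Q_def by auto
    have yQ: "Q (f j0)" using fa fa1 Q_def by simp
    have rj: "r \<le> j0" using False by simp
    obtain k where k: "r \<le> k" "k < j0" "\<not> Q (f k)" "Q (f (Suc k))"
      using cross_down[of r j0 Q f, OF rj nQ yQ] by blast
    have "f j0 \<le> f k" using j0min[of k] k j0b lr by simp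
    then have "f a \<le> f k" using k(3) fa1 Q_def by auto
    then have "f a < f k" using ne[of a k] k j0b al lr by fastforce
    then have "k \<le> Suc (Suc a)"
      using bar[of "Suc a" "Suc k" a k] k Q_def Ea pe[of k] al lr j0b by auto
    then have "k = Suc (Suc a)" "Suc a = l" "r = Suc l" using k lr al by auto
    then show ?thesis using k(4) Q_def lmin j0b k by auto
  qed
  define m2 where "m2 = Suc (Suc l)"
  have m2: "m2 \<le> n" "f l < f m2" "f m2 < f a" "r = Suc l" "Suc a = l" using L m2_def by auto
  have Er: "E (f m2) (f r)" using pe[of r] m2 m2_def by simp
  have step3: "\<And>k. k \<le> a \<Longrightarrow> f m2 < f k"
  proof (rule ccontr)
    fix k assume k: "k \<le> a" "\<not> f m2 < f k"
    have "f k \<noteq> f m2" using ne[of k m2] k m2 m2_def al by simp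
    then have fk: "f k < f m2" using lin_aux[OF k(2)] by simp
    define R where "R = (\<lambda>x. f m2 < x \<and> x < f r)"
    have "f a \<le> f r" "f a \<noteq> f r" using rmax[of a] ne[of a r] m2 al lr by auto
    then have "f a < f r" by (rule le_neq_trans)
    then have Ra: "R (f a)" unfolding R_def using m2 by simp
    have Rk: "\<not> R (f k)" unfolding R_def using fk by (meson less_asym)
    have ka: "k \<le> a" using k by simp
    obtain m where m: "k \<le> m" "m < a" "\<not> R (f m)" "R (f (Suc m))"
      using cross_down[of k a R f, OF ka Rk Ra] by blast
    have "f m \<le> f r" "f m \<noteq> f r" using rmax[of m] ne[of m r] m m2 al lr by auto
    then have fmr: "f m < f r" by (rule le_neq_trans)
    have "\<not> f m2 < f m" using m(3) fmr unfolding R_def by blast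
    moreover have "f m2 \<noteq> f m" using ne[of m2 m] m m2 m2_def al by simp
    ultimately have fm: "f m < f m2" using lin_aux by blast
    have fsm: "f m2 < f (Suc m)" "f (Suc m) < f r" using m(4) unfolding R_def by auto
    have "Suc m < n" "m < n" using m al lr by auto
    then have "E (f m) (f (Suc m))" using pe by blast
    then have "l \<le> m" using bar[of m m2 "Suc m" r] fm fsm Er m2 lr \<open>Suc m < n\<close> by simp
    then show False using m m2 al by simp
  qed
  have step4: "f n < f a"
  proof (rule ccontr)
    assume a1: "\<not> f n < f a"
    have "f n \<noteq> f a" using ne[of n a] m2 al lr by simp
    then have fan: "f a < f n" using lin_aux[OF a1] by simp
    define R where "R = (\<lambda>x. f l < x \<and> x < f a)"
    have R1: "R (f m2)" unfolding R_def using m2 by simp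
    have R2: "\<not> R (f n)" unfolding R_def using fan by (meson less_asym)
    obtain m where m: "m2 \<le> m" "m < n" "R (f m)" "\<not> R (f (Suc m))"
      using cross_up[of m2 n R f, OF m2(1) R1 R2] by blast
    have "f l \<le> f (Suc m)" "f l \<noteq> f (Suc m)" using lmin[of "Suc m"] ne[of l "Suc m"] m m2_def by auto
    then have fl: "f l < f (Suc m)" by (rule le_neq_trans)
    have "\<not> f (Suc m) < f a" using m(4) fl unfolding R_def by blast
    moreover have "f (Suc m) \<noteq> f a" using ne[of "Suc m" a] m m2_def al by simp
    ultimately have fsa: "f a < f (Suc m)" using lin_aux by blast
    have fm: "f l < f m" "f m < f a" using m(3) unfolding R_def by auto
    have "E (f m) (f (Suc m))" using pe m by blast
    then have "m \<le> l" using bar[of l m a "Suc m"] fm fsa Ea m m2 al lr by simp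
    then show False using m m2_def by simp
  qed
  define B where "B = {k. k \<le> a \<and> f k < f n}"
  have finB: "finite B" unfolding B_def by simp
  have "0 \<in> B" unfolding B_def using st by simp
  define b where "b = Max B"
  have bB: "b \<in> B" unfolding b_def using finB \<open>0 \<in> B\<close> Max_in by blast
  have bmax: "\<And>k. k \<in> B \<Longrightarrow> k \<le> b" unfolding b_def using finB by simp
  have "b \<le> a" "f b < f n" using bB unfolding B_def by auto
  then have ba: "b < a" using step4 by (metis le_less less_asym)
  have fb: "f b < f n" using bB B_def by simp
  have "Suc b \<notin> B" using bmax by fastforce
  then have "\<not> f (Suc b) < f n" using ba unfolding B_def by simp
  moreover have "f (Suc b) \<noteq> f n" using ne[of "Suc b" n] ba m2 al lr by simp
  ultimately have fb1: "f n < f (Suc b)" using lin_aux by blast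
  have fbm: "f m2 < f b" using step3 ba by simp
  define R where "R = (\<lambda>x. f b < x \<and> x < f (Suc b))"
  have R1: "\<not> R (f m2)" unfolding R_def using fbm by (meson less_asym)
  have R2: "R (f n)" unfolding R_def using fb fb1 by simp
  obtain m where m: "m2 \<le> m" "m < n" "\<not> R (f m)" "R (f (Suc m))"
    using cross_down[of m2 n R f, OF m2(1) R1 R2] by blast
  have Eb: "E (f b) (f (Suc b))" using pe[of b] ba m2 al lr by simp
  have Em: "E (f m) (f (Suc m))" using pe m by blast
  have n1: "f m \<noteq> f b" "f m \<noteq> f (Suc b)" using ne[of m b] ne[of m "Suc b"] m ba m2 m2_def al lr by auto
  have fsm: "f b < f (Suc m)" "f (Suc m) < f (Suc b)" using m(4) unfolding R_def by auto
  show False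
  proof (cases "f m < f b")
    case True
    then have "Suc b \<le> Suc m \<and> m \<le> Suc (Suc b)"
      using bar[of m b "Suc m" "Suc b"] fsm Eb Em m m2 ba al lr by simp
    then show False using m m2_def ba al lr by simp
  next
    case False
    then have "\<not> f m < f (Suc b)" using m(3) unfolding R_def using n1 lin_aux by blast
    then have "f (Suc b) < f m" using n1 lin_aux by blast
    then have "m \<le> Suc b" using bar[of b "Suc m" "Suc b" m] fsm Eb Em pe[of m] m m2 ba al lr by simp
    then show False using m m2_def ba al lr by simp
  qed
qed

theorem lemma8:
  fixes V :: "'a::linorder set" and E :: "'a \<Rightarrow> 'a \<Rightarrow> bool" and s t :: 'a and P :: "'a list"
  assumes "graph V E" and "X_property V E"
    and "s \<in> V" and "t \<in> V" and "s < t"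
    and "connected_pair E s t"
    and "shortest_path E P s t"
    and "lefti P < righti P"
  shows "(\<forall>i j. i < lefti P \<and> lefti P < j \<and> j < length P \<longrightarrow> P ! i < P ! j)
       \<and> (\<forall>i j. i < righti P \<and> righti P < j \<and> j < length P \<longrightarrow> P ! i < P ! j)"
proof -
  have w: "walk E P s t" using assms(7) by (simp add: shortest_path_def)
  have Pne: "P \<noteq> []" and hdP: "hd P = s" and lastP: "last P = t"
    and e: "\<forall>i. Suc i < length P \<longrightarrow> E (P ! i) (P ! Suc i)" using w by (auto simp: walk_def)
  define n where "n = length P - 1"
  have len: "length P = Suc n" using Pne n_def by simp
  have P0: "P ! 0 = s" using hdP Pne by (simp add: hd_conv_nth)
  have Pn: "P ! n = t" using lastP Pne n_def by (simp add: last_conv_nth)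
  have st: "P ! 0 < P ! n" using P0 Pn assms(5) by simp
  have sym: "\<And>x y. E x y \<Longrightarrow> E y x" and inV: "\<And>x y. E x y \<Longrightarrow> x \<in> V \<and> y \<in> V"
    using assms(1) by (auto simp: graph_def)
  have ne: "\<And>a b. a \<le> n \<Longrightarrow> b \<le> n \<Longrightarrow> a \<noteq> b \<Longrightarrow> P ! a \<noteq> P ! b"
  proof -
    have *: "P ! a \<noteq> P ! b" if "a < b" "b \<le> n" for a b
    proof
      assume eq: "P ! a = P ! b"
      have "walk E (take a P @ drop b P) s t" using walk_skip[OF w that(1) _ eq] that len by simp
      then have "length P \<le> length (take a P @ drop b P)" using sp_len[OF assms(7)] by blast
      then show False using that len by simp
    qed
    fix a b assume "a \<le> n" "b \<le> n" "a \<noteq> b"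
    then show "P ! a \<noteq> P ! b" using *[of a b] *[of b a] by (cases "a < b") auto
  qed
  have nosc: "\<And>a b. a \<le> n \<Longrightarrow> b \<le> n \<Longrightarrow> E (P ! a) (P ! b) \<Longrightarrow> b \<le> Suc a \<and> a \<le> Suc b"
  proof -
    have *: "b \<le> Suc a" if "a \<le> n" "b \<le> n" "E (P ! a) (P ! b)" for a b
    proof (rule ccontr)
      assume "\<not> b \<le> Suc a"
      then have ab: "a < b" by simp
      have "walk E (take (Suc a) P @ drop b P) s t" using walk_shortcut[OF w ab _ that(3)] that len by simp
      then have "length P \<le> length (take (Suc a) P @ drop b P)" using sp_len[OF assms(7)] by blast
      then show False using that len \<open>\<not> b \<le> Suc a\<close> by simp
    qed
    fix a b assume "a \<le> n" "b \<le> n" "E (P ! a) (P ! b)"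
    then show "b \<le> Suc a \<and> a \<le> Suc b" using *[of a b] *[of b a] sym by blast
  qed
  have pe: "\<And>k. k < n \<Longrightarrow> E (P ! k) (P ! Suc k) \<and> E (P ! Suc k) (P ! k)"
    using e len sym by auto
  have bar0: "\<And>p q r u. p \<le> n \<Longrightarrow> q \<le> n \<Longrightarrow> r \<le> n \<Longrightarrow> u \<le> n \<Longrightarrow>
      P ! p < P ! q \<Longrightarrow> P ! q < P ! r \<Longrightarrow> P ! r < P ! u \<Longrightarrow> E (P ! p) (P ! r) \<Longrightarrow> E (P ! q) (P ! u) \<Longrightarrow>
      u \<le> Suc p \<and> p \<le> Suc u"
  proof -
    fix p q r u assume h: "p \<le> n" "q \<le> n" "r \<le> n" "u \<le> n"
      "P ! p < P ! q" "P ! q < P ! r" "P ! r < P ! u" "E (P ! p) (P ! r)" "E (P ! q) (P ! u)"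
    have "E (P ! p) (P ! u)" using assms(2) h inV unfolding X_property_def by blast
    then show "u \<le> Suc p \<and> p \<le> Suc u" using nosc h by blast
  qed
  have dP: "distinct P" using ne len by (auto simp: distinct_conv_nth)
  have MinP: "Min (set P) \<in> set P" "Max (set P) \<in> set P" using Pne by auto
  have ex1: "\<exists>!i. i < length P \<and> P ! i = m" if "m \<in> set P" for m
    using that dP by (metis in_set_conv_nth nth_eq_iff_index_eq)
  have li: "lefti P < length P \<and> P ! lefti P = Min (set P)"
    unfolding lefti_def by (rule theI') (rule ex1[OF MinP(1)])
  have ri: "righti P < length P \<and> P ! righti P = Max (set P)"
    unfolding righti_def by (rule theI') (rule ex1[OF MinP(2)])
  define l where "l = lefti P"
  define r where "r = righti P"
  have lmin: "\<And>k. k \<le> n \<Longrightarrow> P ! l \<le> P ! k" using li len l_def by simp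
  have rmax: "\<And>k. k \<le> n \<Longrightarrow> P ! k \<le> P ! r" using ri len r_def by simp
  have lr: "l < r" "r \<le> n" using assms(8) ri len l_def r_def by auto
  have A: "\<forall>i j. i < l \<and> l < j \<and> j < length P \<longrightarrow> P ! i < P ! j"
  proof (intro allI impI)
    fix i j assume "i < l \<and> l < j \<and> j < length P"
    then show "P ! i < P ! j"
      using core[of n "\<lambda>k. P ! k" E l r i j] ne pe bar0 lmin rmax lr st len by auto
  qed
  have B: "\<forall>i j. i < r \<and> r < j \<and> j < length P \<longrightarrow> P ! i < P ! j"
  proof (intro allI impI)
    fix i j assume ij: "i < r \<and> r < j \<and> j < length P"
    define g where "g = (\<lambda>k. dual (P ! (n - k)))"
    define E' where "E' = (\<lambda>x y. E (undual x) (undual y))"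
    have c1: "\<And>a b. a \<le> n \<Longrightarrow> b \<le> n \<Longrightarrow> a \<noteq> b \<Longrightarrow> g a \<noteq> g b"
      unfolding g_def using ne by (simp add: dual_inject)
    have c2: "\<And>k. k < n \<Longrightarrow> E' (g k) (g (Suc k)) \<and> E' (g (Suc k)) (g k)"
    proof -
      fix k assume "k < n"
      then have "n - k = Suc (n - Suc k)" by simp
      then show "E' (g k) (g (Suc k)) \<and> E' (g (Suc k)) (g k)"
        unfolding g_def E'_def using pe[of "n - Suc k"] \<open>k < n\<close> by (simp add: dual_inverse)
    qed
    have c3: "\<And>a b c d. a \<le> n \<Longrightarrow> b \<le> n \<Longrightarrow> c \<le> n \<Longrightarrow> d \<le> n \<Longrightarrow>
      g a < g b \<Longrightarrow> g b < g c \<Longrightarrow> g c < g d \<Longrightarrow> E' (g a) (g c) \<Longrightarrow> E' (g b) (g d) \<Longrightarrow>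
      d \<le> Suc a \<and> a \<le> Suc d"
    proof -
      fix a b c d assume h: "a \<le> n" "b \<le> n" "c \<le> n" "d \<le> n"
        "g a < g b" "g b < g c" "g c < g d" "E' (g a) (g c)" "E' (g b) (g d)"
      have "n - a \<le> Suc (n - d) \<and> n - d \<le> Suc (n - a)"
        using bar0[of "n - d" "n - c" "n - b" "n - a"] h sym
        unfolding g_def E'_def by (simp add: dual_inverse)
      then show "d \<le> Suc a \<and> a \<le> Suc d" using h by auto
    qed
    have c4: "\<And>k. k \<le> n \<Longrightarrow> g (n - r) \<le> g k" unfolding g_def using rmax lr by simp
    have c5: "\<And>k. k \<le> n \<Longrightarrow> g k \<le> g (n - l)" unfolding g_def using lmin lr by simp
    have "g (n - j) < g (n - i)"
      using core[of n g E' "n - r" "n - l" "n - j" "n - i"] c1 c2 c3 c4 c5 lr st ij len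
      unfolding g_def by auto
    then show "P ! i < P ! j" using ij len lr unfolding g_def by simp
  qed
  show ?thesis using A B l_def r_def by simp
qed
end
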